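(* Let $(X,\le)$ be a poset and $E$ an equivalence relation on $X$ with ${\le}\subseteq E$. Then: (i) ${\le}\in\mathsf{Up}(\mathbf E)$; (ii) ${\le}\circ R=R\circ{\le}=R$ for all $R\in\mathsf{Up}(\mathbf E)$; (iii) ${\le}^\smile\circ S=S\circ{\le}^\smile=S$ for all $S\in\mathsf{Down}(\mathbf E)$.
   Context: For binary relations: converse $R^\smile=\{(x,y)\mid(y,x)\in R\}$; composition $R\circ S=\{(x,y)\mid\exists z\,((x,z)\in R,(z,y)\in S)\}$. For a poset $(X,\le)$ and an equivalence relation $E\supseteq{\le}$ on $X$, $E$ is partially ordered by $(u,v)\preceq(x,y)$ iff $x\le u$ and $v\le y$; $\mathbf E=(E,\preceq)$, and $\mathsf{Up}(\mathbf E)$, $\mathsf{Down}(\mathbf E)$ are its sets of up-sets and down-sets. The relation $\le$ is regarded as the set $\{(x,y)\mid x\le y\}\subseteq X^2$. *)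

theory Defs
  imports Main
begin

definition poset_on :: "'a set \<Rightarrow> ('a \<times> 'a) set \<Rightarrow> bool" where
  "poset_on X le \<longleftrightarrow> le \<subseteq> X \<times> X \<and> refl_on X le \<and> antisym le \<and> trans le"

definition E_le :: "('a \<times> 'a) set \<Rightarrow> ('a \<times> 'a) \<Rightarrow> ('a \<times> 'a) \<Rightarrow> bool" where
  "E_le le p q \<longleftrightarrow> (fst q, fst p) \<in> le \<and> (snd p, snd q) \<in> le"

definition Up_E :: "('a \<times> 'a) set \<Rightarrow> ('a \<times> 'a) set \<Rightarrow> ('a \<times> 'a) set set" where
  "Up_E le E = {U. U \<subseteq> E \<and> (\<forall>p\<in>U. \<forall>q\<in>E. E_le le p q \<longrightarrow> q \<in> U)}"

definition Down_E :: "('a \<times> 'a) set \<Rightarrow> ('a \<times> 'a) set \<Rightarrow> ('a \<times> 'a) set set" where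
  "Down_E le E = {D. D \<subseteq> E \<and> (\<forall>p\<in>D. \<forall>q\<in>E. E_le le q p \<longrightarrow> q \<in> D)}"

end

theory Submission
  imports Defs
begin

theorem lemma3p6:
  fixes X :: "'a set" and le E :: "('a \<times> 'a) set"
  assumes "poset_on X le"
    and "equiv X E"
    and "le \<subseteq> E"
  shows "le \<in> Up_E le E
         \<and> (\<forall>R\<in>Up_E le E. le O R = R \<and> R O le = R)
         \<and> (\<forall>S\<in>Down_E le E. converse le O S = S \<and> S O converse le = S)"
proof -
  have sub: "le \<subseteq> X \<times> X" and rf: "refl_on X le" and tr: "trans le"
    using assms(1) unfolding poset_on_def by auto
  have Esub: "E \<subseteq> X \<times> X" and Etr: "trans E" and Esym: "sym E"
    using assms(2) unfolding equiv_def refl_on_def by auto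
  have refl: "\<And>x. x \<in> X \<Longrightarrow> (x,x) \<in> le" using rf unfolding refl_on_def by auto
  have Etrans: "\<And>a b c. (a,b) \<in> E \<Longrightarrow> (b,c) \<in> E \<Longrightarrow> (a,c) \<in> E"
    using Etr unfolding trans_def by blast
  have Esy: "\<And>a b. (a,b) \<in> E \<Longrightarrow> (b,a) \<in> E" using Esym unfolding sym_def by blast
  have ltr: "\<And>a b c. (a,b) \<in> le \<Longrightarrow> (b,c) \<in> le \<Longrightarrow> (a,c) \<in> le"
    using tr unfolding trans_def by blast
  have X1: "\<And>a b. (a,b) \<in> E \<Longrightarrow> a \<in> X" "\<And>a b. (a,b) \<in> E \<Longrightarrow> b \<in> X" using Esub by auto
  have i: "le \<in> Up_E le E"
    unfolding Up_E_def E_le_def using assms(3) ltr by fastforce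
  have ii: "\<forall>R\<in>Up_E le E. le O R = R \<and> R O le = R"
  proof
    fix R assume R: "R \<in> Up_E le E"
    hence RE: "R \<subseteq> E" and up: "\<And>p q. p \<in> R \<Longrightarrow> q \<in> E \<Longrightarrow> E_le le p q \<Longrightarrow> q \<in> R"
      unfolding Up_E_def by auto
    have "le O R \<subseteq> R"
    proof
      fix p assume "p \<in> le O R"
      then obtain x z y where p: "p = (x,y)" "(x,z) \<in> le" "(z,y) \<in> R" by blast
      have "(x,y) \<in> E" using p assms(3) RE Etrans by blast
      moreover have "(y,y) \<in> le" using p RE X1 refl by blast
      ultimately show "p \<in> R" using up[of "(z,y)" "(x,y)"] p unfolding E_le_def by auto
    qed
    moreover have "R \<subseteq> le O R"
    proof
      fix p assume "p \<in> R"
      then obtain x y where p: "p = (x,y)" "(x,y) \<in> R" by (cases p) auto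
      have "(x,x) \<in> le" using p RE X1 refl by blast
      then show "p \<in> le O R" using p by blast
    qed
    moreover have "R O le \<subseteq> R"
    proof
      fix p assume "p \<in> R O le"
      then obtain x z y where p: "p = (x,y)" "(x,z) \<in> R" "(z,y) \<in> le" by blast
      have "(x,y) \<in> E" using p assms(3) RE Etrans by blast
      moreover have "(x,x) \<in> le" using p RE X1 refl by blast
      ultimately show "p \<in> R" using up[of "(x,z)" "(x,y)"] p unfolding E_le_def by auto
    qed
    moreover have "R \<subseteq> R O le"
    proof
      fix p assume "p \<in> R"
      then obtain x y where p: "p = (x,y)" "(x,y) \<in> R" by (cases p) auto
      have "(y,y) \<in> le" using p RE X1 refl by blast
      then show "p \<in> R O le" using p by blast
    qed
    ultimately show "le O R = R \<and> R O le = R" by blast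
  qed
  have iii: "\<forall>S\<in>Down_E le E. converse le O S = S \<and> S O converse le = S"
  proof
    fix R assume R: "R \<in> Down_E le E"
    hence RE: "R \<subseteq> E" and dn: "\<And>p q. p \<in> R \<Longrightarrow> q \<in> E \<Longrightarrow> E_le le q p \<Longrightarrow> q \<in> R"
      unfolding Down_E_def by auto
    have "converse le O R \<subseteq> R"
    proof
      fix p assume "p \<in> converse le O R"
      then obtain x z y where p: "p = (x,y)" "(z,x) \<in> le" "(z,y) \<in> R" by blast
      have "(x,y) \<in> E" using p assms(3) RE Etrans Esy by blast
      moreover have "(y,y) \<in> le" using p RE X1 refl by blast
      ultimately show "p \<in> R" using dn[of "(z,y)" "(x,y)"] p unfolding E_le_def by auto
    qed
    moreover have "R \<subseteq> converse le O R"
    proof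
      fix p assume "p \<in> R"
      then obtain x y where p: "p = (x,y)" "(x,y) \<in> R" by (cases p) auto
      have "(x,x) \<in> le" using p RE X1 refl by blast
      then show "p \<in> converse le O R" using p by blast
    qed
    moreover have "R O converse le \<subseteq> R"
    proof
      fix p assume "p \<in> R O converse le"
      then obtain x z y where p: "p = (x,y)" "(x,z) \<in> R" "(y,z) \<in> le" by blast
      have "(x,y) \<in> E" using p assms(3) RE Etrans Esy by blast
      moreover have "(x,x) \<in> le" using p RE X1 refl by blast
      ultimately show "p \<in> R" using dn[of "(x,z)" "(x,y)"] p unfolding E_le_def by auto
    qed
    moreover have "R \<subseteq> R O converse le"
    proof
      fix p assume "p \<in> R"
      then obtain x y where p: "p = (x,y)" "(x,y) \<in> R" by (cases p) auto
      have "(y,y) \<in> le" using p RE X1 refl by blast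
      then show "p \<in> R O converse le" using p by blast
    qed
    ultimately show "converse le O R = R \<and> R O converse le = R" by blast
  qed
  show ?thesis using i ii iii by blast
qed

end
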